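(* Fix $n\ge2$. Let $p:S^n\to\mathbb{RP}^n$ be the standard double cover and $q:\mathbb R\to S^1$, $q(\theta)=e^{i\theta}$. Then the product covering $p\times q:S^n\times\mathbb R\to\mathbb{RP}^n\times S^1$ is not equivalent (as a covering over $\mathbb{RP}^n\times S^1$) to any Weierstrass entire covering.
   Context: For a topological space $X$, a Weierstrass entire family is a continuous map $F:X\times\mathbb C\to\mathbb C$ such that for each $x\in X$, $z\mapsto F(x,z)$ is entire, and such that the zero locus $Z(F)=\{(x,z):F(x,z)=0\}$ with the first projection $p_1:Z(F)\to X$ is a countably infinite-sheeted covering. This covering is the Weierstrass entire covering associated to $F$. *)

theory Defs
  imports "HOL-Analysis.Analysis" "HOL-Complex_Analysis.Complex_Analysis"
begin

definition covering_map_top :: "'e topology \<Rightarrow> 'x topology \<Rightarrow> ('e \<Rightarrow> 'x) \<Rightarrow> bool" where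
  "covering_map_top E X p \<longleftrightarrow>
     continuous_map E X p \<and> p ` topspace E = topspace X \<and>
     (\<forall>x \<in> topspace X. \<exists>T. x \<in> T \<and> openin X T \<and>
        (\<exists>v. \<Union>v = {e \<in> topspace E. p e \<in> T} \<and>
             (\<forall>u \<in> v. openin E u) \<and> pairwise disjnt v \<and>
             (\<forall>u \<in> v. homeomorphic_map (subtopology E u) (subtopology X T) p)))"

definition coverings_equivalent ::
  "'e1 topology \<Rightarrow> ('e1 \<Rightarrow> 'x) \<Rightarrow> 'e2 topology \<Rightarrow> ('e2 \<Rightarrow> 'x) \<Rightarrow> bool" where
  "coverings_equivalent E1 p1 E2 p2 \<longleftrightarrow>
     (\<exists>h. homeomorphic_map E1 E2 h \<and> (\<forall>e \<in> topspace E1. p2 (h e) = p1 e))"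

definition zero_locus_top :: "'x topology \<Rightarrow> ('x \<times> complex \<Rightarrow> complex) \<Rightarrow> ('x \<times> complex) topology" where
  "zero_locus_top X F = subtopology (prod_topology X euclidean)
      {(x, z). x \<in> topspace X \<and> F (x, z) = 0}"

definition weierstrass_entire_family :: "'x topology \<Rightarrow> ('x \<times> complex \<Rightarrow> complex) \<Rightarrow> bool" where
  "weierstrass_entire_family X F \<longleftrightarrow>
     continuous_map (prod_topology X euclidean) euclidean F \<and>
     (\<forall>x \<in> topspace X. (\<lambda>z. F (x, z)) holomorphic_on UNIV) \<and>
     covering_map_top (zero_locus_top X F) X fst \<and>
     (\<forall>x \<in> topspace X. countable {z. F (x, z) = 0} \<and> infinite {z. F (x, z) = 0})"

text \<open>The sphere S^n = unit sphere of a Euclidean space of dimension n+1.\<close>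
definition sphere_top :: "('a::euclidean_space) topology" where
  "sphere_top = top_of_set (sphere 0 1)"

text \<open>Real projective space: points are antipodal pairs {x,-x}, with the
  quotient topology from the sphere.\<close>
definition rp_proj :: "'a::euclidean_space \<Rightarrow> 'a set" where
  "rp_proj x = {x, -x}"

definition rp_top :: "('a::euclidean_space) set topology" where
  "rp_top = topology (\<lambda>U. U \<subseteq> rp_proj ` sphere 0 1 \<and>
        openin (top_of_set (sphere 0 1)) {x \<in> sphere 0 1. rp_proj x \<in> U})"

definition circle_top :: "complex topology" where
  "circle_top = top_of_set (sphere 0 1)"

end

theory Submission
  imports Defs
begin

lemma exp_eq_disc:
  fixes a b :: complex
  assumes "exp a = exp b" "a \<noteq> b"
  shows "2*pi \<le> norm (a - b)"
proof -
  obtain n::int where n: "a = b + 2 * of_int n * pi * \<i>" using assms(1) by (auto simp: exp_eq)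
  with assms(2) have "n \<noteq> 0" by auto
  then have "1 \<le> \<bar>real_of_int n\<bar>" by linarith
  have "norm (a - b) = 2 * pi * \<bar>real_of_int n\<bar>" using n by (simp add: norm_mult)
  also have "\<dots> \<ge> 2*pi" using \<open>1 \<le> _\<close> by (simp add: pi_gt_zero) 
  finally show ?thesis .
qed

lemma no_antipodal_sep:
  fixes g :: "'a::euclidean_space \<Rightarrow> complex"
  assumes "DIM('a) \<ge> 3" "continuous_on (sphere 0 1) g"
  shows "\<exists>y\<in>sphere 0 1. g y = g (-y)"
proof (rule ccontr)
  assume "\<not> ?thesis"
  then have ne: "\<And>y. y \<in> sphere 0 1 \<Longrightarrow> g y - g (-y) \<noteq> 0" by auto
  let ?S = "sphere (0::'a) 1"
  have B: "Borsukian ?S"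
    by (rule simply_connected_imp_Borsukian) (use assms(1) simply_connected_sphere locally_path_connected_sphere in auto)
  have cneg: "continuous_on ?S (\<lambda>y. g (-y))"
    by (rule continuous_on_compose2[OF assms(2)]) (auto intro: continuous_intros)
  have cf: "continuous_on ?S (\<lambda>y. g y - g (-y))"
    by (intro continuous_intros assms(2) cneg)
  have pi: "(\<lambda>y. g y - g (-y)) \<in> ?S \<rightarrow> - {0}" using ne by auto
  obtain L where cL: "continuous_on ?S L" and L: "\<And>y. y \<in> ?S \<Longrightarrow> g y - g (-y) = exp (L y)"
    using B[unfolded Borsukian_continuous_logarithm, rule_format, OF conjI[OF cf pi]] by blast
  define d where "d y = L (-y) - L y" for y
  have cLn: "continuous_on ?S (\<lambda>y. L (-y))"
    by (rule continuous_on_compose2[OF cL]) (auto intro: continuous_intros)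
  have cd: "continuous_on ?S d" unfolding d_def by (intro continuous_intros cLn cL)
  have ed: "exp (d y) = -1" if "y \<in> ?S" for y
  proof -
    have my: "-y \<in> ?S" using that by simp
    have "exp (L (-y)) = - exp (L y)" using L[OF my, symmetric] L[OF that, symmetric] by (simp add: minus_diff_eq)
    then show ?thesis unfolding d_def using exp_diff[of "L (-y)" "L y"]
      by (simp add: that)
  qed
  have "d constant_on ?S"
  proof (rule continuous_discrete_range_constant[OF connected_sphere cd])
    show "2 \<le> DIM('a)" using assms(1) by simp
    fix x assume x: "x \<in> ?S"
    show "\<exists>e>0. \<forall>y. y \<in> ?S \<and> d y \<noteq> d x \<longrightarrow> e \<le> norm (d y - d x)"
      by (rule exI[of _ "2*pi"]) (use x ed exp_eq_disc in \<open>auto simp: pi_gt_zero\<close>)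
  qed
  then obtain c where c: "\<And>y. y \<in> ?S \<Longrightarrow> d y = c" by (auto simp: constant_on_def)
  obtain b :: 'a where "b \<in> Basis" using SOME_Basis by blast
  then have y0: "b \<in> ?S" by simp
  define y0 where "y0 = b"
  note y0 = y0[folded y0_def]
  have "-y0 \<in> ?S" using y0 by simp
  have "d (-y0) = - d y0" by (simp add: d_def)
  then have "c = 0" using c[OF y0] c[OF \<open>-y0 \<in> ?S\<close>] by simp
  then show False using ed[OF y0] c[OF y0] by simp
qed
theorem mainTheorem15:
  assumes "DIM('a::euclidean_space) \<ge> 3"
  shows "\<not> (\<exists>F. weierstrass_entire_family (prod_topology (rp_top :: 'a set topology) circle_top) F \<and>
               coverings_equivalent
                 (prod_topology (sphere_top :: 'a topology) (euclideanreal))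
                 (\<lambda>(x, \<theta>). (rp_proj x, exp (\<i> * complex_of_real \<theta>)))
                 (zero_locus_top (prod_topology rp_top circle_top) F) fst)"
proof
  assume "\<exists>F. weierstrass_entire_family (prod_topology (rp_top :: 'a set topology) circle_top) F \<and>
               coverings_equivalent
                 (prod_topology (sphere_top :: 'a topology) (euclideanreal))
                 (\<lambda>(x, \<theta>). (rp_proj x, exp (\<i> * complex_of_real \<theta>)))
                 (zero_locus_top (prod_topology rp_top circle_top) F) fst"
  then obtain F h where hom: "homeomorphic_map (prod_topology (sphere_top :: 'a topology) euclideanreal)
                 (zero_locus_top (prod_topology (rp_top :: 'a set topology) circle_top) F) h"
    and fh: "\<And>e. e \<in> topspace (prod_topology (sphere_top :: 'a topology) euclideanreal) \<Longrightarrow>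
               fst (h e) = (\<lambda>(x, \<theta>). (rp_proj x, exp (\<i> * complex_of_real \<theta>))) e"
    unfolding coverings_equivalent_def by blast
  let ?S = "sphere (0::'a) 1"
  have ts: "topspace (prod_topology (sphere_top :: 'a topology) euclideanreal) = ?S \<times> UNIV"
    by (simp add: sphere_top_def)
  have ch: "continuous_map (prod_topology (sphere_top :: 'a topology) euclideanreal)
              (prod_topology (prod_topology (rp_top :: 'a set topology) circle_top) euclidean) h"
    using homeomorphic_imp_continuous_map[OF hom] unfolding zero_locus_top_def
    using continuous_map_into_fulltopology by blast
  have ci: "continuous_map (top_of_set ?S) (prod_topology (sphere_top :: 'a topology) euclideanreal) (\<lambda>y. (y, 0))"
    by (intro continuous_map_pairedI) (auto simp: sphere_top_def)
  define g where "g y = snd (h (y, 0::real))" for y :: 'a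
  have "continuous_map (top_of_set ?S) euclidean g"
    unfolding g_def using continuous_map_compose[OF continuous_map_compose[OF ci ch] continuous_map_snd]
    by (simp add: o_def)
  then have cg: "continuous_on ?S g" by simp
  obtain y where y: "y \<in> ?S" and gy: "g y = g (-y)"
    using no_antipodal_sep[OF assms cg] by blast
  have my: "-y \<in> ?S" using y by simp
  have "y \<noteq> -y"
  proof
    assume "y = -y"
    then have "y + y = 0" by (metis add.right_inverse)
    then have "2 *\<^sub>R y = 0" by (simp add: scaleR_2)
    then show False using y by simp
  qed
  then have "h (y, 0) \<noteq> h (-y, 0)"
    using homeomorphic_imp_injective_map[OF hom] y my unfolding ts inj_on_def by blast
  moreover have "fst (h (y, 0)) = fst (h (-y, 0))"
    using fh[of "(y,0)"] fh[of "(-y,0)"] y my unfolding ts by (simp add: rp_proj_def insert_commute)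
  ultimately show False using gy unfolding g_def by (simp add: prod_eq_iff)
qed

end
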